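(* Let $a\in\mathbb{R}$, $\lambda>0$, and let $w$ be any solution of Airy's equation $w''(x)=xw(x)$. Define $$\mathcal{K}(a,\lambda;x,y,z)=\exp\big((\lambda/2)^{1/2}xyz\big)\,w\Big(\frac{\lambda^{1/3}}{2}(x^2+y^2+z^2)+\frac{a}{\lambda^{2/3}}\Big).$$ Then $$H(x)\mathcal{K}(x,y,z)=H(y)\mathcal{K}(x,y,z)=H(z)\mathcal{K}(x,y,z),$$ where $H(x)=-\frac{\partial^2}{\partial x^2}+ax^2+\frac{\lambda}{2}x^4$ acts in the variable $x$, and similarly for $H(y)$, $H(z)$. *)

theory Defs
  imports "HOL-Analysis.Analysis"
begin

definition Kker :: "real \<Rightarrow> real \<Rightarrow> (real \<Rightarrow> real) \<Rightarrow> real \<Rightarrow> real \<Rightarrow> real \<Rightarrow> real" where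
  "Kker a lam w x y z =
     exp (sqrt (lam / 2) * x * y * z) *
     w (lam powr (1/3) / 2 * (x^2 + y^2 + z^2) + a / lam powr (2/3))"

definition Hop :: "real \<Rightarrow> real \<Rightarrow> (real \<Rightarrow> real) \<Rightarrow> real \<Rightarrow> real" where
  "Hop a lam g t = - deriv (deriv g) t + (a * t^2 + lam / 2 * t^4) * g t"

end

theory Submission
  imports Defs
begin

lemma d2:
  fixes c p B D :: real and w w' :: "real \<Rightarrow> real"
  assumes w1: "\<And>t. (w has_real_derivative w' t) (at t)"
    and w2: "\<And>t. (w' has_real_derivative t  *  w t) (at t)"
  shows "deriv (deriv (\<lambda>s. exp (c * s * B)  *  w (p * s ^ 2+D))) t =
     exp (c * t * B)  *  ((c * B) ^ 2  *  w (p * t ^ 2+D) + 4 * c * B * p * t  *  w' (p * t ^ 2+D) + 2 * p * w' (p * t ^ 2+D)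
        + 4 * p ^ 2 * t ^ 2 * (p * t ^ 2+D)  *  w (p * t ^ 2+D))"
proof -
  have D1: "\<And>s. ((\<lambda>s. exp (c * s * B)  *  w (p * s ^ 2+D)) has_real_derivative
      exp (c * s * B)  *  (c * B  *  w (p * s ^ 2+D) + 2 * p * s  *  w' (p * s ^ 2+D))) (at s)"
  proof -
    fix s
    have a: "((\<lambda>s. exp (c * s * B)) has_real_derivative exp (c * s * B)  *  (c * B)) (at s)"
      by (auto intro!: derivative_eq_intros)
    have b: "((\<lambda>s. w (p * s ^ 2+D)) has_real_derivative w' (p * s ^ 2+D)  *  (p * (2 * s))) (at s)"
      by (rule DERIV_chain2[OF w1]) (auto intro!: derivative_eq_intros)
    show "?thesis s" using DERIV_mult[OF a b] by (simp add: algebra_simps)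
  qed
  have e: "deriv (\<lambda>s. exp (c * s * B)  *  w (p * s ^ 2+D)) =
      (\<lambda>s. exp (c * s * B)  *  (c * B  *  w (p * s ^ 2+D) + 2 * p * s  *  w' (p * s ^ 2+D)))"
    using D1 DERIV_imp_deriv by blast
  have a: "((\<lambda>s. exp (c * s * B)) has_real_derivative exp (c * t * B)  *  (c * B)) (at t)"
    by (auto intro!: derivative_eq_intros)
  have b: "((\<lambda>s. w (p * s ^ 2+D)) has_real_derivative w' (p * t ^ 2+D)  *  (p * (2 * t))) (at t)"
    by (rule DERIV_chain2[OF w1]) (auto intro!: derivative_eq_intros)
  have b': "((\<lambda>s. w' (p * s ^ 2+D)) has_real_derivative (p * t ^ 2+D)  *  w (p * t ^ 2+D)  *  (p * (2 * t))) (at t)"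
    by (rule DERIV_chain2[OF w2]) (auto intro!: derivative_eq_intros)
  have l: "((\<lambda>s. c * B  *  w (p * s ^ 2+D) + 2 * p * s  *  w' (p * s ^ 2+D)) has_real_derivative
     c * B * (w' (p * t ^ 2+D)  *  (p * (2 * t))) + (2 * p * w' (p * t ^ 2+D) + 2 * p * t * ((p * t ^ 2+D)  *  w (p * t ^ 2+D)  *  (p * (2 * t))))) (at t)"
  proof -
    have m: "((\<lambda>s. 2 * p * s) has_real_derivative 2 * p) (at t)"
      by (auto intro!: derivative_eq_intros)
    show ?thesis using DERIV_add[OF DERIV_cmult[OF b, of "c * B"] DERIV_mult[OF m b']]
      by (simp add: algebra_simps)
  qed
  have "((\<lambda>s. exp (c * s * B)  *  (c * B  *  w (p * s ^ 2+D) + 2 * p * s  *  w' (p * s ^ 2+D))) has_real_derivative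
     exp (c * t * B)  *  ((c * B) ^ 2  *  w (p * t ^ 2+D) + 4 * c * B * p * t  *  w' (p * t ^ 2+D) + 2 * p * w' (p * t ^ 2+D)
        + 4 * p ^ 2 * t ^ 2 * (p * t ^ 2+D)  *  w (p * t ^ 2+D))) (at t)"
    using DERIV_mult[OF a l] by (simp add: algebra_simps power2_eq_square)
  then show ?thesis unfolding e by (rule DERIV_imp_deriv)
qed

lemma common:
  fixes a lam c r t B S E :: real and w w' :: "real \<Rightarrow> real"
  assumes c2: "c^2 = lam/2" and r3: "r^3 = lam" and r0: "r > 0"
  shows "- (E * ((c * B)^2 * w (r/2 * t^2 + (r/2 * S + a/r^2)) + 4 * c * B * (r/2) * t * w' (r/2 * t^2 + (r/2 * S + a/r^2)) + 2 * (r/2) * w' (r/2 * t^2 + (r/2 * S + a/r^2))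
        + 4 * (r/2)^2 * t^2 * (r/2 * t^2 + (r/2 * S + a/r^2)) * w (r/2 * t^2 + (r/2 * S + a/r^2)))) + (a * t^2 + lam/2 * t^4) * (E * w (r/2 * t^2 + (r/2 * S + a/r^2)))
   = E * (- (2 * c * r * (t * B) + r) * w' (r/2 * t^2 + (r/2 * S + a/r^2)) - lam/2 * (B^2 + t^2 * S) * w (r/2 * t^2 + (r/2 * S + a/r^2)))"
proof -
  define U where "U = r/2 * t^2 + (r/2 * S + a/r^2)"
  have h: "4 * (r/2)^2 * t^2 * U = lam/2 * t^2 * (t^2+S) + a * t^2"
    unfolding U_def r3[symmetric] using r0 by (simp add: field_simps power2_eq_square power3_eq_cube)
  have h2: "(c * B)^2 = lam/2 * B^2" by (simp add: power_mult_distrib c2)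
  have "- (E * ((c * B)^2 * w U + 4 * c * B * (r/2) * t * w' U + 2 * (r/2) * w' U
        + 4 * (r/2)^2 * t^2 * U * w U)) + (a * t^2 + lam/2 * t^4) * (E * w U)
   = E * (- (2 * c * r * (t * B) + r) * w' U - lam/2 * (B^2 + t^2 * S) * w U)"
  proof -
    have h': "E * w U * (4 * (r/2)^2 * t^2 * U) = E * w U * (lam/2 * t^2 * (t^2+S) + a * t^2)"
      using h by simp
    show ?thesis unfolding h2 using h' by (simp add: algebra_simps power2_eq_square power4_eq_xxxx)
  qed
  then show ?thesis unfolding U_def .
qed

theorem proposition1:
  fixes a lam :: real and w w' :: "real \<Rightarrow> real" and x y z :: real
  assumes "lam > 0"
    and w1: "\<And>t. (w has_real_derivative w' t) (at t)"
    and w2: "\<And>t. (w' has_real_derivative t * w t) (at t)"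
  shows "Hop a lam (\<lambda>s. Kker a lam w s y z) x = Hop a lam (\<lambda>s. Kker a lam w x s z) y
       \<and> Hop a lam (\<lambda>s. Kker a lam w x s z) y = Hop a lam (\<lambda>s. Kker a lam w x y s) z"
proof -
  define c where "c = sqrt (lam/2)"
  define r where "r = lam powr (1/3)"
  have c2: "c^2 = lam/2" using assms(1) by (simp add: c_def)
  have r0: "r > 0" using assms(1) by (simp add: r_def)
  have r3: "r^3 = lam" using assms(1) unfolding r_def
    by (simp add: powr_realpow[symmetric] powr_powr)
  have r2: "lam powr (2/3) = r^2" using assms(1) unfolding r_def
    by (simp add: powr_realpow[symmetric] powr_powr)
  define U where "U = r/2 * (x^2+y^2+z^2) + a / r^2"
  have U_alt: "\<And>t S. t^2 + S = x^2+y^2+z^2 \<Longrightarrow> r/2 * t^2 + (r/2 * S + a/r^2) = U"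
  proof -
    fix t S :: real assume h: "t^2 + S = x^2+y^2+z^2"
    have "r/2 * t^2 + r/2 * S = r/2 * (x^2+y^2+z^2)" by (simp add: h[symmetric] distrib_left)
    then show "r/2 * t^2 + (r/2 * S + a/r^2) = U" by (simp add: U_def)
  qed
  define E where "E = exp (c * x * y * z)"
  define R where "R = E * (- (2 * c * r * (x * y * z) + r) * w' U - lam/2 * (x^2 * y^2+y^2 * z^2+x^2 * z^2) * w U)"
  have K: "\<And>s y z. Kker a lam w s y z = exp (c * s * (y * z)) * w (r/2 * s^2 + (r/2 * (y^2+z^2) + a/r^2))"
    unfolding Kker_def c_def r_def[symmetric] r2 by (simp add: algebra_simps)
  have hx: "Hop a lam (\<lambda>s. Kker a lam w s y z) x = R"
    unfolding Hop_def K d2[OF w1 w2]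
    apply (subst common[OF c2 r3 r0])
    apply (subst U_alt[of x "y^2+z^2"], simp)+
    apply (simp add: R_def E_def algebra_simps power_mult_distrib)
    done
  have K2: "(\<lambda>s. Kker a lam w x s z) = (\<lambda>s. exp (c * s * (x * z)) * w (r/2 * s^2 + (r/2 * (x^2+z^2) + a/r^2)))"
    unfolding Kker_def c_def r_def[symmetric] r2 by (simp add: algebra_simps)
  have hy: "Hop a lam (\<lambda>s. Kker a lam w x s z) y = R"
    unfolding Hop_def K2 d2[OF w1 w2]
    apply (subst common[OF c2 r3 r0])
    apply (subst U_alt[of y "x^2+z^2"], simp)+
    apply (simp add: R_def E_def algebra_simps power_mult_distrib)
    done
  have K3: "(\<lambda>s. Kker a lam w x y s) = (\<lambda>s. exp (c * s * (x * y)) * w (r/2 * s^2 + (r/2 * (x^2+y^2) + a/r^2)))"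
    unfolding Kker_def c_def r_def[symmetric] r2 by (simp add: algebra_simps)
  have hz: "Hop a lam (\<lambda>s. Kker a lam w x y s) z = R"
    unfolding Hop_def K3 d2[OF w1 w2]
    apply (subst common[OF c2 r3 r0])
    apply (subst U_alt[of z "x^2+y^2"], simp)+
    apply (simp add: R_def E_def algebra_simps power_mult_distrib)
    done
  show ?thesis using hx hy hz by simp
qed

end
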